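(* Let $K=3$ and let $l>m\ge s$ be nonnegative integers. Then \[ h(l,\,m+1,\,s)\ \ge\ h(l+1,\,m,\,s)\qquad\text{and}\qquad h(l,\,m,\,s+1)\ \ge\ h(l+1,\,m,\,s). \]
   Context: For a vector $\vec n=(n_1,n_2,n_3)$ of nonnegative integers, the following random process is run: stocks start at $\vec n^{(0)}=\vec n$; at each step $t=1,2,\dots$, as long as at least two coordinates of $\vec n^{(t-1)}$ are nonzero, an index $i$ is chosen uniformly at random (independently of the past) among the indices with $n_i^{(t-1)}>0$, and $\vec n^{(t)}=\vec n^{(t-1)}-\vec e_i$ ($\vec e_i$ the $i$-th standard unit vector). The process stops at the first time $T$ at which at most one coordinate is nonzero, and $h(\vec n)=\mathbb{E}[T]$. Equivalently, with $\operatorname{support}(\vec n)=\{i:n_i\ne 0\}$: $h(\vec n)=0$ if $|\operatorname{support}(\vec n)|\le1$, and otherwise $h(\vec n)=1+\frac{1}{|\operatorname{support}(\vec n)|}\sum_{i\in\operatorname{support}(\vec n)}h(\vec n-\vec e_i)$. Note $h$ is symmetric in its arguments. *)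

theory Defs
  imports Complex_Main
begin

text \<open>Expected stopping time h(n1,n2,n3) of the three-stock random depletion process.
  h n = 0 if at most one coordinate is nonzero; otherwise
  h n = 1 + (1 / |supp n|) * sum over i in supp n of h (n - e_i).\<close>

function h :: "nat \<Rightarrow> nat \<Rightarrow> nat \<Rightarrow> real" where
  "h n1 n2 n3 =
    (let S = {i::nat. (i = 1 \<and> n1 \<noteq> 0) \<or> (i = 2 \<and> n2 \<noteq> 0) \<or> (i = 3 \<and> n3 \<noteq> 0)}
     in if card S \<le> 1 then 0
        else 1 + (1 / real (card S)) *
          ((if n1 \<noteq> 0 then h (n1 - 1) n2 n3 else 0)
         + (if n2 \<noteq> 0 then h n1 (n2 - 1) n3 else 0)
         + (if n3 \<noteq> 0 then h n1 n2 (n3 - 1) else 0)))"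
  by pat_completeness auto
termination
  by (relation "measure (\<lambda>(a, b, c). a + b + c)") auto

end

theory Submission
  imports Defs
begin

declare h.simps[simp del]

lemma h_000: "h a 0 0 = 0" "h 0 b 0 = 0" "h 0 0 c = 0"
proof -
  show "h a 0 0 = 0"
  proof -
    have "{i::nat. (i = 1 \<and> a \<noteq> 0) \<or> (i = 2 \<and> (0::nat) \<noteq> 0) \<or> (i = 3 \<and> (0::nat) \<noteq> 0)} \<subseteq> {1}" by auto
    then have "card {i::nat. (i = 1 \<and> a \<noteq> 0) \<or> (i = 2 \<and> (0::nat) \<noteq> 0) \<or> (i = 3 \<and> (0::nat) \<noteq> 0)} \<le> 1"
      by (metis card.empty card_mono card_insert_disjoint empty_iff finite.intros(1) finite_insert One_nat_def)
    then show ?thesis by (subst h.simps) (simp add: Let_def)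
  qed
  show "h 0 b 0 = 0"
  proof -
    have "{i::nat. (i = 1 \<and> (0::nat) \<noteq> 0) \<or> (i = 2 \<and> b \<noteq> 0) \<or> (i = 3 \<and> (0::nat) \<noteq> 0)} \<subseteq> {2}" by auto
    then have "card {i::nat. (i = 1 \<and> (0::nat) \<noteq> 0) \<or> (i = 2 \<and> b \<noteq> 0) \<or> (i = 3 \<and> (0::nat) \<noteq> 0)} \<le> 1"
      by (metis card.empty card_mono card_insert_disjoint empty_iff finite.intros(1) finite_insert One_nat_def)
    then show ?thesis by (subst h.simps) (simp add: Let_def)
  qed
  show "h 0 0 c = 0"
  proof -
    have "{i::nat. (i = 1 \<and> (0::nat) \<noteq> 0) \<or> (i = 2 \<and> (0::nat) \<noteq> 0) \<or> (i = 3 \<and> c \<noteq> 0)} \<subseteq> {3}" by auto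
    then have "card {i::nat. (i = 1 \<and> (0::nat) \<noteq> 0) \<or> (i = 2 \<and> (0::nat) \<noteq> 0) \<or> (i = 3 \<and> c \<noteq> 0)} \<le> 1"
      by (metis card.empty card_mono card_insert_disjoint empty_iff finite.intros(1) finite_insert One_nat_def)
    then show ?thesis by (subst h.simps) (simp add: Let_def)
  qed
qed

lemma h_3: "h (Suc a) (Suc b) (Suc c) = 1 + (h a (Suc b) (Suc c) + h (Suc a) b (Suc c) + h (Suc a) (Suc b) c) / 3"
proof -
  have "{i::nat. (i = 1 \<and> Suc a \<noteq> 0) \<or> (i = 2 \<and> Suc b \<noteq> 0) \<or> (i = 3 \<and> Suc c \<noteq> 0)} = {1,2,3}" by auto
  then show ?thesis by (subst h.simps) (simp add: Let_def)
qed

lemma h_12: "h (Suc a) (Suc b) 0 = 1 + (h a (Suc b) 0 + h (Suc a) b 0) / 2"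
proof -
  have "{i::nat. (i = 1 \<and> Suc a \<noteq> 0) \<or> (i = 2 \<and> Suc b \<noteq> 0) \<or> (i = 3 \<and> (0::nat) \<noteq> 0)} = {1,2}" by auto
  then show ?thesis by (subst h.simps) (simp add: Let_def)
qed

lemma h_13: "h (Suc a) 0 (Suc c) = 1 + (h a 0 (Suc c) + h (Suc a) 0 c) / 2"
proof -
  have "{i::nat. (i = 1 \<and> Suc a \<noteq> 0) \<or> (i = 2 \<and> (0::nat) \<noteq> 0) \<or> (i = 3 \<and> Suc c \<noteq> 0)} = {1,3}" by auto
  then show ?thesis by (subst h.simps) (simp add: Let_def)
qed

lemma h_23: "h 0 (Suc b) (Suc c) = 1 + (h 0 b (Suc c) + h 0 (Suc b) c) / 2"
proof -
  have "{i::nat. (i = 1 \<and> (0::nat) \<noteq> 0) \<or> (i = 2 \<and> Suc b \<noteq> 0) \<or> (i = 3 \<and> Suc c \<noteq> 0)} = {2,3}" by auto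
  then show ?thesis by (subst h.simps) (simp add: Let_def)
qed

lemma h_3m: "3 * h (Suc a) (Suc b) (Suc c) = 3 + h a (Suc b) (Suc c) + h (Suc a) b (Suc c) + h (Suc a) (Suc b) c"
  using h_3[of a b c] by simp

lemma h_12m: "2 * h (Suc a) (Suc b) 0 = 2 + h a (Suc b) 0 + h (Suc a) b 0"
  using h_12[of a b] by simp

lemma h_13m: "2 * h (Suc a) 0 (Suc c) = 2 + h a 0 (Suc c) + h (Suc a) 0 c"
  using h_13[of a c] by simp

lemma h_23m: "2 * h 0 (Suc b) (Suc c) = 2 + h 0 b (Suc c) + h 0 (Suc b) c"
  using h_23[of b c] by simp

lemma h_sym_all: "h a b c = h b a c \<and> h a b c = h a c b"
proof (induction "a+b+c" arbitrary: a b c rule: less_induct)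
  case less
  show ?case
  proof (cases a)
    case 0
    then show ?thesis
    proof (cases b; cases c)
      fix b' c' assume "b = Suc b'" "c = Suc c'"
      then show ?thesis using 0 less[of 0 b' "Suc c'"] less[of 0 "Suc b'" c']
        by (simp add: h_12 h_13 h_23 h_000)
    qed (simp_all add: h_12 h_13 h_23 h_000 0)
  next
    case (Suc a')
    then show ?thesis
    proof (cases b; cases c)
      assume "b = 0" "c = 0" then show ?thesis using Suc by (simp add: h_000)
    next
      fix c' assume "b = 0" "c = Suc c'"
      then show ?thesis using Suc less[of a' 0 "Suc c'"] less[of "Suc a'" 0 c']
        by (simp add: h_12 h_13 h_23 h_000)
    next
      fix b' assume "b = Suc b'" "c = 0"
      then show ?thesis using Suc less[of a' "Suc b'" 0] less[of "Suc a'" b' 0]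
        by (simp add: h_12 h_13 h_23 h_000)
    next
      fix b' c' assume "b = Suc b'" "c = Suc c'"
      then show ?thesis using Suc less[of a' "Suc b'" "Suc c'"] less[of "Suc a'" b' "Suc c'"]
          less[of "Suc a'" "Suc b'" c']
        by (simp add: h_3 algebra_simps)
    qed
  qed
qed

lemma h_sym12: "h a b c = h b a c" and h_sym23: "h a b c = h a c b" and h_sym13: "h a b c = h c b a"
  using h_sym_all by metis+

lemma h_nonneg: "h a b c \<ge> 0"
proof (induction "a+b+c" arbitrary: a b c rule: less_induct)
  case less
  show ?case
  proof (cases a; cases b; cases c)
  qed (auto simp: h_000 h_3 h_12 h_13 h_23 intro!: add_nonneg_nonneg divide_nonneg_pos less)
qed

lemma g1: "h x 0 (Suc 0) = 2 - 2*(1/2::real)^x"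
proof (induction x)
  case 0 then show ?case by (simp add: h_000)
next
  case (Suc x)
  have "h (Suc x) 0 (Suc 0) = 1 + (h x 0 (Suc 0) + h (Suc x) 0 0)/2" by (rule h_13)
  then show ?case using Suc by (simp add: h_000)
qed

lemma g1': "h x 0 1 = 2 - 2*(1/2::real)^x"
  using g1 by simp

lemma phi: "h x 0 1 + h (x+1) 0 1 - h x 0 2 \<ge> 0"
proof (induction x)
  case 0 then show ?case by (simp add: g1 h_000)
next
  case (Suc x)
  have e: "2 * h (Suc x) 0 2 = 2 + h x 0 2 + h (Suc x) 0 1"
    using h_13m[of x 1] by (simp add: numeral_2_eq_2)
  have p: "(1/2::real)^x > 0" by simp
  have a1: "h (Suc x) 0 1 = 2 - (1/2::real)^x" using g1'[of "Suc x"] by simp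
  have a2: "h (Suc x + 1) 0 1 = 2 - (1/2::real)^x/2" using g1'[of "Suc x + 1"] by simp
  have a0: "h x 0 1 = 2 - 2*(1/2::real)^x" using g1'[of x] by simp
  have a3: "h (x + 1) 0 1 = 2 - (1/2::real)^x" using g1'[of "x+1"] by simp
  show ?case using Suc.IH e p a0 a1 a2 a3 by linarith
qed

definition F :: "nat \<Rightarrow> nat \<Rightarrow> real" where
  "F p q = h (p-1) 0 q + h p 0 q - h p 0 (q-1) - h (p-1) 0 (q+1)"

lemma F_nonneg: "F (Suc p) (Suc q) \<ge> 0"
proof (induction "p+q" arbitrary: p q rule: less_induct)
  case less
  show ?case
  proof (cases p)
    case 0
    have "h 1 0 (Suc q) = h (Suc q) 0 1" "h 1 0 q = h q 0 1" using h_sym13 by blast+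
    moreover have "(1/2::real)^q \<ge> 0" by simp
    ultimately show ?thesis using 0 by (simp add: F_def h_000 g1)
  next
    case (Suc p')
    show ?thesis
    proof (cases q)
      case 0
      then show ?thesis using phi[of "Suc p'"] Suc by (simp add: F_def h_000 numeral_2_eq_2)
    next
      case (Suc q')
      have A: "F (Suc p) (Suc q) = h p 0 (Suc q) + h (Suc p) 0 (Suc q) - h (Suc p) 0 q - h p 0 (Suc (Suc q))"
        by (simp add: F_def)
      have B: "F p (Suc q) = h p' 0 (Suc q) + h p 0 (Suc q) - h p 0 q - h p' 0 (Suc (Suc q))"
        using \<open>p = Suc p'\<close> by (simp add: F_def)
      have C: "F (Suc p) q = h p 0 q + h (Suc p) 0 q - h (Suc p) 0 q' - h p 0 (Suc q)"
        using Suc by (simp add: F_def)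
      have e1: "2 * h p 0 (Suc q) = 2 + h p' 0 (Suc q) + h p 0 q"
        using h_13m[of p' q] \<open>p = Suc p'\<close> by simp
      have e2: "2 * h (Suc p) 0 (Suc q) = 2 + h p 0 (Suc q) + h (Suc p) 0 q"
        using h_13m[of p q] by simp
      have e3: "2 * h (Suc p) 0 q = 2 + h p 0 q + h (Suc p) 0 q'"
        using h_13m[of p q'] Suc by simp
      have e4: "2 * h p 0 (Suc (Suc q)) = 2 + h p' 0 (Suc (Suc q)) + h p 0 (Suc q)"
        using h_13m[of p' "Suc q"] \<open>p = Suc p'\<close> by simp
      have r: "2 * F (Suc p) (Suc q) = F p (Suc q) + F (Suc p) q"
        using A B C e1 e2 e3 e4 by linarith
      have "F p (Suc q) \<ge> 0" using less[of p' q] \<open>p = Suc p'\<close> by simp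
      moreover have "F (Suc p) q \<ge> 0" using less[of p q'] Suc by simp
      ultimately show ?thesis using r by linarith
    qed
  qed
qed

lemma kk: "h x 1 1 \<le> h x 0 1 + h (x+1) 0 1"
proof (induction x)
  case 0
  have "h 0 1 1 = 1" using h_23[of 0 0] by (simp add: h_000)
  moreover have "h 1 0 1 = 1" using g1'[of 1] by simp
  ultimately show ?case by (simp add: h_000)
next
  case (Suc x)
  have e: "3 * h (Suc x) 1 1 = 3 + h x 1 1 + h (Suc x) 0 1 + h (Suc x) 1 0"
    using h_3m[of x 0 0] by simp
  have s: "h (Suc x) 1 0 = h (Suc x) 0 1" using h_sym23 by blast
  have p: "(1/2::real)^x > 0" by simp
  have a1: "h (Suc x) 0 1 = 2 - (1/2::real)^x" using g1'[of "Suc x"] by simp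
  have a2: "h (Suc x + 1) 0 1 = 2 - (1/2::real)^x/2" using g1'[of "Suc x + 1"] by simp
  have a0: "h x 0 1 = 2 - 2*(1/2::real)^x" using g1'[of x] by simp
  have a3: "h (x + 1) 0 1 = 2 - (1/2::real)^x" using g1'[of "x+1"] by simp
  show ?case using Suc.IH e s p a0 a1 a2 a3 by linarith
qed

definition D :: "nat \<Rightarrow> nat \<Rightarrow> nat \<Rightarrow> real" where
  "D a b c = h (a-1) (b+1) c - h a b c"

definition S :: "nat \<Rightarrow> nat \<Rightarrow> nat \<Rightarrow> real" where
  "S x b z = h (x-1) (b+1) z + h x (b+1) (z-1) - 2 * h x b z"

lemma D_zero: "D (Suc b) b c = 0"
  unfolding D_def using h_sym12[of b "Suc b" c] by simp

lemma S_swap: "S x b z = S z b x"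
  unfolding S_def using h_sym13[of "x-1" "b+1" z] h_sym13[of x "b+1" "z-1"] h_sym13[of x b z] by simp

lemma S_tie: "S a b a = 2 * D a b a"
  unfolding S_def D_def using h_sym13[of a "b+1" "a-1"] by simp

lemma S_edge: "S (Suc b) b z = D z b (Suc b)"
  unfolding S_def D_def using h_sym13[of "Suc b" "Suc b" "z-1"] h_sym12[of b "Suc b" z]
    h_sym13[of z b "Suc b"] by simp

lemma D0_rec: "6 * D (Suc (Suc a)) 0 (Suc c) = 2 * D (Suc a) 0 (Suc c) + 2 * D (Suc (Suc a)) 0 c
   + h (Suc a) 0 (Suc c) - h (Suc (Suc a)) 0 c"
proof -
  have e1: "3 * h (Suc a) 1 (Suc c) = 3 + h a 1 (Suc c) + h (Suc a) 0 (Suc c) + h (Suc a) 1 c"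
    using h_3m[of a 0 c] by simp
  have e2: "2 * h (Suc (Suc a)) 0 (Suc c) = 2 + h (Suc a) 0 (Suc c) + h (Suc (Suc a)) 0 c"
    using h_13m[of "Suc a" c] by simp
  have d1: "D (Suc (Suc a)) 0 (Suc c) = h (Suc a) 1 (Suc c) - h (Suc (Suc a)) 0 (Suc c)" by (simp add: D_def)
  have d2: "D (Suc a) 0 (Suc c) = h a 1 (Suc c) - h (Suc a) 0 (Suc c)" by (simp add: D_def)
  have d3: "D (Suc (Suc a)) 0 c = h (Suc a) 1 c - h (Suc (Suc a)) 0 c" by (simp add: D_def)
  show ?thesis using e1 e2 d1 d2 d3 by linarith
qed

lemma M0: "D (Suc a) 0 c - D (Suc a) 0 (Suc c) \<ge> 0"
proof (induction "a+c" arbitrary: a c rule: less_induct)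
  case less
  show ?case
  proof (cases a)
    case 0
    then show ?thesis using D_zero[of 0] by simp
  next
    case (Suc a')
    show ?thesis
    proof (cases c)
      case 0
      have d1: "D (Suc a) 0 0 = h a 1 0" by (simp add: D_def h_000)
      have d2: "D (Suc a) 0 1 = h a 1 1 - h (Suc a) 0 1" by (simp add: D_def)
      have s: "h a 1 0 = h a 0 1" using h_sym23 by blast
      show ?thesis using kk[of a] d1 d2 s 0 by simp
    next
      case (Suc c')
      have r1: "6 * D (Suc a) 0 c = 2 * D a 0 c + 2 * D (Suc a) 0 c' + h a 0 c - h (Suc a) 0 c'"
        using D0_rec[of a' c'] \<open>a = Suc a'\<close> Suc by simp
      have r2: "6 * D (Suc a) 0 (Suc c) = 2 * D a 0 (Suc c) + 2 * D (Suc a) 0 c + h a 0 (Suc c) - h (Suc a) 0 c"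
        using D0_rec[of a' c] \<open>a = Suc a'\<close> by simp
      have f: "F (Suc a) c = h a 0 c + h (Suc a) 0 c - h (Suc a) 0 c' - h a 0 (Suc c)"
        using Suc by (simp add: F_def)
      have fn: "F (Suc a) c \<ge> 0" using F_nonneg[of a c'] Suc by simp
      have i1: "D a 0 c - D a 0 (Suc c) \<ge> 0" using less[of a' c] \<open>a = Suc a'\<close> by simp
      have i2: "D (Suc a) 0 c' - D (Suc a) 0 c \<ge> 0" using less[of a c'] Suc by simp
      show ?thesis using r1 r2 f fn i1 i2 by linarith
    qed
  qed
qed

lemma psi: "h 1 1 y \<ge> h 1 0 (Suc y)"
proof (induction y)
  case 0
  have "h 1 1 0 = 1" using h_12[of 0 0] by (simp add: h_000)
  moreover have "h 1 0 1 = 1" using g1'[of 1] by simp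
  ultimately show ?case by simp
next
  case (Suc y)
  have e1: "3 * h 1 1 (Suc y) = 3 + h 0 1 (Suc y) + h 1 0 (Suc y) + h 1 1 y"
    using h_3m[of 0 0 y] by simp
  have e2: "2 * h 1 0 (Suc (Suc y)) = 2 + h 0 0 (Suc (Suc y)) + h 1 0 (Suc y)"
    using h_13m[of 0 "Suc y"] by simp
  have s: "h 0 1 (Suc y) = h 1 0 (Suc y)" using h_sym12 by blast
  have z: "h 0 0 (Suc (Suc y)) = 0" by (simp add: h_000)
  have n: "h 1 0 (Suc y) \<ge> 0" by (rule h_nonneg)
  show ?case using Suc.IH e1 e2 s z n by linarith
qed

lemma S0_rec: "3 * S (Suc (Suc x)) 0 (Suc (Suc z)) = S (Suc x) 0 (Suc (Suc z)) + S (Suc (Suc x)) 0 (Suc z)"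
proof -
  have e1: "3 * h (Suc x) 1 (Suc (Suc z)) = 3 + h x 1 (Suc (Suc z)) + h (Suc x) 0 (Suc (Suc z)) + h (Suc x) 1 (Suc z)"
    using h_3m[of x 0 "Suc z"] by simp
  have e2: "3 * h (Suc (Suc x)) 1 (Suc z) = 3 + h (Suc x) 1 (Suc z) + h (Suc (Suc x)) 0 (Suc z) + h (Suc (Suc x)) 1 z"
    using h_3m[of "Suc x" 0 z] by simp
  have e3: "2 * h (Suc (Suc x)) 0 (Suc (Suc z)) = 2 + h (Suc x) 0 (Suc (Suc z)) + h (Suc (Suc x)) 0 (Suc z)"
    using h_13m[of "Suc x" "Suc z"] by simp
  have s1: "S (Suc (Suc x)) 0 (Suc (Suc z)) = h (Suc x) 1 (Suc (Suc z)) + h (Suc (Suc x)) 1 (Suc z) - 2 * h (Suc (Suc x)) 0 (Suc (Suc z))"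
    by (simp add: S_def)
  have s2: "S (Suc x) 0 (Suc (Suc z)) = h x 1 (Suc (Suc z)) + h (Suc x) 1 (Suc z) - 2 * h (Suc x) 0 (Suc (Suc z))"
    by (simp add: S_def)
  have s3: "S (Suc (Suc x)) 0 (Suc z) = h (Suc x) 1 (Suc z) + h (Suc (Suc x)) 1 z - 2 * h (Suc (Suc x)) 0 (Suc z)"
    by (simp add: S_def)
  show ?thesis using e1 e2 e3 s1 s2 s3 by linarith
qed

lemma S0: "S (Suc x) 0 (Suc z) \<ge> 0"
proof (induction "x+z" arbitrary: x z rule: less_induct)
  case less
  have base: "S 1 0 (Suc y) \<ge> 0" for y
  proof -
    have "S 1 0 (Suc y) = h 0 1 (Suc y) + h 1 1 y - 2 * h 1 0 (Suc y)" by (simp add: S_def)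
    moreover have "h 0 1 (Suc y) = h 1 0 (Suc y)" using h_sym12 by blast
    ultimately show ?thesis using psi[of y] by linarith
  qed
  show ?case
  proof (cases x)
    case 0 then show ?thesis using base by simp
  next
    case (Suc x')
    show ?thesis
    proof (cases z)
      case 0 then show ?thesis using base[of x] S_swap[of "Suc x" 0 1] by simp
    next
      case (Suc z')
      have "S (Suc x') 0 (Suc z) \<ge> 0" using less[of x' z] \<open>x = Suc x'\<close> by simp
      moreover have "S (Suc x) 0 (Suc z') \<ge> 0" using less[of x z'] Suc by simp
      ultimately show ?thesis using S0_rec[of x' z'] \<open>x = Suc x'\<close> Suc by simp
    qed
  qed
qed

lemma Q0_chain: "D (Suc a) 0 c \<ge> D (Suc a) 0 (c + k)"
proof (induction k)
  case 0 then show ?case by simp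
next
  case (Suc k)
  then show ?case using M0[of a "c+k"] by simp
qed

lemma Q0: assumes "c \<le> Suc a" shows "D (Suc a) 0 c \<ge> 0"
proof -
  have "D (Suc a) 0 c \<ge> D (Suc a) 0 (c + (Suc a - c))" by (rule Q0_chain)
  then have "D (Suc a) 0 c \<ge> D (Suc a) 0 (Suc a)" using assms by simp
  moreover have "S (Suc a) 0 (Suc a) \<ge> 0" by (rule S0)
  ultimately show ?thesis using S_tie[of "Suc a" 0] by simp
qed

lemma D_rec3: "3 * D (Suc (Suc a)) (Suc b) (Suc c) = D (Suc a) (Suc b) (Suc c) + D (Suc (Suc a)) b (Suc c) + D (Suc (Suc a)) (Suc b) c"
proof -
  have e1: "3 * h (Suc a) (Suc (Suc b)) (Suc c) = 3 + h a (Suc (Suc b)) (Suc c) + h (Suc a) (Suc b) (Suc c) + h (Suc a) (Suc (Suc b)) c"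
    using h_3m[of a "Suc b" c] by simp
  have e2: "3 * h (Suc (Suc a)) (Suc b) (Suc c) = 3 + h (Suc a) (Suc b) (Suc c) + h (Suc (Suc a)) b (Suc c) + h (Suc (Suc a)) (Suc b) c"
    using h_3m[of "Suc a" b c] by simp
  have d1: "D (Suc (Suc a)) (Suc b) (Suc c) = h (Suc a) (Suc (Suc b)) (Suc c) - h (Suc (Suc a)) (Suc b) (Suc c)" by (simp add: D_def)
  have d2: "D (Suc a) (Suc b) (Suc c) = h a (Suc (Suc b)) (Suc c) - h (Suc a) (Suc b) (Suc c)" by (simp add: D_def)
  have d3: "D (Suc (Suc a)) b (Suc c) = h (Suc a) (Suc b) (Suc c) - h (Suc (Suc a)) b (Suc c)" by (simp add: D_def)
  have d4: "D (Suc (Suc a)) (Suc b) c = h (Suc a) (Suc (Suc b)) c - h (Suc (Suc a)) (Suc b) c" by (simp add: D_def)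
  show ?thesis using e1 e2 d1 d2 d3 d4 by linarith
qed

lemma D_rec2: "2 * D (Suc (Suc a)) (Suc b) 0 = D (Suc a) (Suc b) 0 + D (Suc (Suc a)) b 0"
proof -
  have e1: "2 * h (Suc a) (Suc (Suc b)) 0 = 2 + h a (Suc (Suc b)) 0 + h (Suc a) (Suc b) 0"
    using h_12m[of a "Suc b"] by simp
  have e2: "2 * h (Suc (Suc a)) (Suc b) 0 = 2 + h (Suc a) (Suc b) 0 + h (Suc (Suc a)) b 0"
    using h_12m[of "Suc a" b] by simp
  have d1: "D (Suc (Suc a)) (Suc b) 0 = h (Suc a) (Suc (Suc b)) 0 - h (Suc (Suc a)) (Suc b) 0" by (simp add: D_def)
  have d2: "D (Suc a) (Suc b) 0 = h a (Suc (Suc b)) 0 - h (Suc a) (Suc b) 0" by (simp add: D_def)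
  have d3: "D (Suc (Suc a)) b 0 = h (Suc a) (Suc b) 0 - h (Suc (Suc a)) b 0" by (simp add: D_def)
  show ?thesis using e1 e2 d1 d2 d3 by linarith
qed

lemma S_rec: "3 * S (Suc (Suc x)) (Suc b) (Suc (Suc z)) = S (Suc x) (Suc b) (Suc (Suc z)) + S (Suc (Suc x)) b (Suc (Suc z)) + S (Suc (Suc x)) (Suc b) (Suc z)"
proof -
  have e1: "3 * h (Suc x) (Suc (Suc b)) (Suc (Suc z)) = 3 + h x (Suc (Suc b)) (Suc (Suc z)) + h (Suc x) (Suc b) (Suc (Suc z)) + h (Suc x) (Suc (Suc b)) (Suc z)"
    using h_3m[of x "Suc b" "Suc z"] by simp
  have e2: "3 * h (Suc (Suc x)) (Suc (Suc b)) (Suc z) = 3 + h (Suc x) (Suc (Suc b)) (Suc z) + h (Suc (Suc x)) (Suc b) (Suc z) + h (Suc (Suc x)) (Suc (Suc b)) z"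
    using h_3m[of "Suc x" "Suc b" z] by simp
  have e3: "3 * h (Suc (Suc x)) (Suc b) (Suc (Suc z)) = 3 + h (Suc x) (Suc b) (Suc (Suc z)) + h (Suc (Suc x)) b (Suc (Suc z)) + h (Suc (Suc x)) (Suc b) (Suc z)"
    using h_3m[of "Suc x" b "Suc z"] by simp
  have s1: "S (Suc (Suc x)) (Suc b) (Suc (Suc z)) = h (Suc x) (Suc (Suc b)) (Suc (Suc z)) + h (Suc (Suc x)) (Suc (Suc b)) (Suc z) - 2 * h (Suc (Suc x)) (Suc b) (Suc (Suc z))"
    by (simp add: S_def)
  have s2: "S (Suc x) (Suc b) (Suc (Suc z)) = h x (Suc (Suc b)) (Suc (Suc z)) + h (Suc x) (Suc (Suc b)) (Suc z) - 2 * h (Suc x) (Suc b) (Suc (Suc z))"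
    by (simp add: S_def)
  have s3: "S (Suc (Suc x)) b (Suc (Suc z)) = h (Suc x) (Suc b) (Suc (Suc z)) + h (Suc (Suc x)) (Suc b) (Suc z) - 2 * h (Suc (Suc x)) b (Suc (Suc z))"
    by (simp add: S_def)
  have s4: "S (Suc (Suc x)) (Suc b) (Suc z) = h (Suc x) (Suc (Suc b)) (Suc z) + h (Suc (Suc x)) (Suc (Suc b)) z - 2 * h (Suc (Suc x)) (Suc b) (Suc z)"
    by (simp add: S_def)
  show ?thesis using e1 e2 e3 s1 s2 s3 s4 by linarith
qed

lemma main: "\<forall>a b c. a + b + c = n \<longrightarrow> ((Suc b \<le> a \<and> c \<le> a \<longrightarrow> D a b c \<ge> 0) \<and> (Suc b \<le> a \<and> Suc b \<le> c \<longrightarrow> S a b c \<ge> 0))"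
proof (induction n rule: less_induct)
  case (less n)
  have IHQ: "D a b c \<ge> 0" if "a + b + c < n" "Suc b \<le> a" "c \<le> a" for a b c
    using less that by blast
  have IHS: "S a b c \<ge> 0" if "a + b + c < n" "Suc b \<le> a" "Suc b \<le> c" for a b c
    using less that by blast
  have Qnt: "D a b c \<ge> 0" if t: "a + b + c = n" "Suc b \<le> a" "c < a" for a b c
  proof (cases b)
    case 0
    then obtain a' where "a = Suc a'" using t by (cases a) auto
    then show ?thesis using Q0[of c a'] t 0 by simp
  next
    case (Suc b0)
    show ?thesis
    proof (cases "a = Suc b")
      case True then show ?thesis using D_zero by simp
    next
      case False
      then obtain a0 where a0: "a = Suc (Suc a0)" using t Suc by (cases a; cases "a - 1") auto
      show ?thesis
      proof (cases c)
        case 0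
        have "D (Suc a0) (Suc b0) 0 \<ge> 0" using IHQ[of "Suc a0" "Suc b0" 0] t a0 Suc False by simp
        moreover have "D (Suc (Suc a0)) b0 0 \<ge> 0" using IHQ[of "Suc (Suc a0)" b0 0] t a0 Suc by simp
        ultimately show ?thesis using D_rec2[of a0 b0] a0 Suc 0 by simp
      next
        case (Suc c0)
        have "D (Suc a0) (Suc b0) (Suc c0) \<ge> 0"
          using IHQ[of "Suc a0" "Suc b0" "Suc c0"] t a0 \<open>b = Suc b0\<close> Suc False by simp
        moreover have "D (Suc (Suc a0)) b0 (Suc c0) \<ge> 0"
          using IHQ[of "Suc (Suc a0)" b0 "Suc c0"] t a0 \<open>b = Suc b0\<close> Suc by simp
        moreover have "D (Suc (Suc a0)) (Suc b0) c0 \<ge> 0"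
          using IHQ[of "Suc (Suc a0)" "Suc b0" c0] t a0 \<open>b = Suc b0\<close> Suc by simp
        ultimately show ?thesis using D_rec3[of a0 b0 c0] a0 \<open>b = Suc b0\<close> Suc by simp
      qed
    qed
  qed
  have Sall: "S x b z \<ge> 0" if t: "x + b + z = n" "Suc b \<le> x" "Suc b \<le> z" for x b z
  proof (cases b)
    case 0
    then obtain x' z' where "x = Suc x'" "z = Suc z'" using t by (cases x; cases z) auto
    then show ?thesis using S0[of x' z'] 0 by simp
  next
    case (Suc b0)
    have edge: "S (Suc b) b w \<ge> 0" if "Suc b + b + w = n" "Suc b \<le> w" for w
    proof (cases "w = Suc b")
      case True then show ?thesis using S_edge[of b w] D_zero[of b] by simp
    next
      case False
      then show ?thesis using S_edge[of b w] Qnt[of w b "Suc b"] that by simp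
    qed
    show ?thesis
    proof (cases "x = Suc b")
      case True then show ?thesis using edge[of z] t by simp
    next
      case xF: False
      show ?thesis
      proof (cases "z = Suc b")
        case True then show ?thesis using edge[of x] t S_swap[of x b z] by simp
      next
        case False
        obtain x0 where x0: "x = Suc (Suc x0)" using t xF Suc by (cases x; cases "x - 1") auto
        obtain z0 where z0: "z = Suc (Suc z0)" using t False Suc by (cases z; cases "z - 1") auto
        have "S (Suc x0) (Suc b0) (Suc (Suc z0)) \<ge> 0"
          using IHS[of "Suc x0" "Suc b0" "Suc (Suc z0)"] t x0 z0 Suc xF by simp
        moreover have "S (Suc (Suc x0)) b0 (Suc (Suc z0)) \<ge> 0"
          using IHS[of "Suc (Suc x0)" b0 "Suc (Suc z0)"] t x0 z0 Suc by simp
        moreover have "S (Suc (Suc x0)) (Suc b0) (Suc z0) \<ge> 0"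
          using IHS[of "Suc (Suc x0)" "Suc b0" "Suc z0"] t x0 z0 Suc False by simp
        ultimately show ?thesis using S_rec[of x0 b0 z0] x0 z0 Suc by simp
      qed
    qed
  qed
  show ?case
  proof (intro allI impI conjI)
    fix a b c assume t: "a + b + c = n" and q: "Suc b \<le> a \<and> c \<le> a"
    show "D a b c \<ge> 0"
    proof (cases "c < a")
      case True then show ?thesis using Qnt t q by blast
    next
      case False
      then have "c = a" using q by simp
      then show ?thesis using Sall[of a b a] S_tie[of a b] t q by simp
    qed
  next
    fix a b c assume t: "a + b + c = n" and q: "Suc b \<le> a \<and> Suc b \<le> c"
    then show "S a b c \<ge> 0" using Sall by blast
  qed
qed

lemma Qmain: assumes "Suc b \<le> a" "c \<le> a" shows "D a b c \<ge> 0"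
  using main[of "a+b+c"] assms by blast

theorem lemma3:
  fixes l m s :: nat
  assumes "l > m" and "m \<ge> s"
  shows "h l (m + 1) s \<ge> h (l + 1) m s \<and> h l m (s + 1) \<ge> h (l + 1) m s"
proof
  have "D (l+1) m s \<ge> 0" using Qmain[of m "l+1" s] assms by simp
  then show "h l (m + 1) s \<ge> h (l + 1) m s" by (simp add: D_def)
next
  have "D (l+1) s m \<ge> 0" using Qmain[of s "l+1" m] assms by simp
  then have "h l (s+1) m \<ge> h (l+1) s m" by (simp add: D_def)
  moreover have "h l (s+1) m = h l m (s+1)" using h_sym23 by blast
  moreover have "h (l+1) s m = h (l+1) m s" using h_sym23 by blast
  ultimately show "h l m (s + 1) \<ge> h (l + 1) m s" by simp
qed

end
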